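(* Let $L$ be a finite simple lattice such that the join of all atoms of $L$ equals $1$, or the meet of all coatoms of $L$ equals $0$. Then the only tolerances on $L$ are $\mathrm{id}_L$ and $L^2$, and consequently $\mathsf{C}(L)=\mathsf{Pol}_{0,1}(L)$.
   Context: $L$ has bounds $0,1$. An atom is an element covering $0$; a coatom is an element covered by $1$. $L$ is simple if its only congruences (compatible equivalence relations) are $\mathrm{id}_L=\{(x,x):x\in L\}$ and $L^2$. A tolerance on $L$ is a reflexive, symmetric binary relation $T$ such that $(a,b),(c,d)\in T$ imply $(a\vee c,b\vee d),(a\wedge c,b\wedge d)\in T$. An $n$-ary aggregation function on $L$ ($n\ge1$) is a nondecreasing map $A:L^n\to L$ with $A(0,\dots,0)=0$, $A(1,\dots,1)=1$; $\mathsf{C}(L)$ is the set of all of them. Polynomials on $L$ are functions $L^n\to L$ built from projections and constants by finitely many pointwise joins and meets; $\mathsf{Pol}_{0,1}(L)$ is the set of polynomials preserving $0$ and $1$. *)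

theory Defs
  imports Main
begin

text \<open>Lattices are modelled as types of class complete_lattice (every finite bounded
lattice is complete); bounds are bot and top.\<close>

definition covers :: "'a::order \<Rightarrow> 'a \<Rightarrow> bool" where
  "covers a b \<longleftrightarrow> a < b \<and> \<not> (\<exists>c. a < c \<and> c < b)"

definition atoms :: "'a::bounded_lattice set" where
  "atoms = {a. covers bot a}"

definition coatoms :: "'a::bounded_lattice set" where
  "coatoms = {a. covers a top}"

definition lattice_compatible :: "('a::lattice \<times> 'a) set \<Rightarrow> bool" where
  "lattice_compatible R \<longleftrightarrow>
     (\<forall>a b c d. (a, b) \<in> R \<longrightarrow> (c, d) \<in> R \<longrightarrow>
        (sup a c, sup b d) \<in> R \<and> (inf a c, inf b d) \<in> R)"

definition lattice_congruence :: "('a::lattice \<times> 'a) set \<Rightarrow> bool" where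
  "lattice_congruence R \<longleftrightarrow> equiv UNIV R \<and> lattice_compatible R"

definition simple_lattice :: "'a::lattice itself \<Rightarrow> bool" where
  "simple_lattice _ \<longleftrightarrow>
     (\<forall>R::('a \<times> 'a) set. lattice_congruence R \<longrightarrow> R = Id \<or> R = UNIV)"

definition tolerance :: "('a::lattice \<times> 'a) set \<Rightarrow> bool" where
  "tolerance T \<longleftrightarrow> refl T \<and> sym T \<and> lattice_compatible T"

text \<open>n-ary functions on L are functions ('n \<Rightarrow> 'a) \<Rightarrow> 'a for a finite index type 'n
  with CARD('n) = n; the order on 'n \<Rightarrow> 'a is the pointwise one.\<close>

definition aggregation_functions :: "(('n::finite \<Rightarrow> 'a::bounded_lattice) \<Rightarrow> 'a) set" where
  "aggregation_functions = {A. mono A \<and> A (\<lambda>_. bot) = bot \<and> A (\<lambda>_. top) = top}"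

inductive_set polynomials :: "(('n \<Rightarrow> 'a::lattice) \<Rightarrow> 'a) set" where
  proj: "(\<lambda>x. x i) \<in> polynomials"
| const: "(\<lambda>x. c) \<in> polynomials"
| join: "f \<in> polynomials \<Longrightarrow> g \<in> polynomials \<Longrightarrow> (\<lambda>x. sup (f x) (g x)) \<in> polynomials"
| meet: "f \<in> polynomials \<Longrightarrow> g \<in> polynomials \<Longrightarrow> (\<lambda>x. inf (f x) (g x)) \<in> polynomials"

definition polynomials_01 :: "(('n::finite \<Rightarrow> 'a::bounded_lattice) \<Rightarrow> 'a) set" where
  "polynomials_01 = {p \<in> polynomials. p (\<lambda>_. bot) = bot \<and> p (\<lambda>_. top) = top}"

end

theory Submission
  imports Defs
begin

lemma tol_sup: "tolerance T \<Longrightarrow> (a,b)\<in>T \<Longrightarrow> (c,d)\<in>T \<Longrightarrow> (sup a c, sup b d) \<in> T"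
  by (auto simp: tolerance_def lattice_compatible_def)
lemma tol_inf: "tolerance T \<Longrightarrow> (a,b)\<in>T \<Longrightarrow> (c,d)\<in>T \<Longrightarrow> (inf a c, inf b d) \<in> T"
  by (auto simp: tolerance_def lattice_compatible_def)
lemma tol_refl: "tolerance T \<Longrightarrow> (x,x)\<in>T"
  by (auto simp: tolerance_def refl_on_def)
lemma tol_sym: "tolerance T \<Longrightarrow> (x,y)\<in>T \<Longrightarrow> (y,x)\<in>T"
  by (auto simp: tolerance_def sym_def)

lemma tr_sup_r: assumes T: "tolerance T" and "(x,y) \<in> T\<^sup>+" shows "(sup x u, sup y u) \<in> T\<^sup>+"
  using assms(2)
proof (induction rule: trancl_induct)
  case (base y) then show ?case using tol_sup[OF T base tol_refl[OF T]] by auto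
next
  case (step y z)
  have "(sup y u, sup z u) \<in> T" using tol_sup[OF T step(2) tol_refl[OF T]] .
  with step(3) show ?case by (meson trancl_into_trancl)
qed

lemma tr_sup_l: assumes T: "tolerance T" and "(x,y) \<in> T\<^sup>+" shows "(sup u x, sup u y) \<in> T\<^sup>+"
  using tr_sup_r[OF assms, of u] by (simp add: sup_commute)

lemma tr_inf_r: assumes T: "tolerance T" and "(x,y) \<in> T\<^sup>+" shows "(inf x u, inf y u) \<in> T\<^sup>+"
  using assms(2)
proof (induction rule: trancl_induct)
  case (base y) then show ?case using tol_inf[OF T base tol_refl[OF T]] by auto
next
  case (step y z)
  have "(inf y u, inf z u) \<in> T" using tol_inf[OF T step(2) tol_refl[OF T]] .
  with step(3) show ?case by (meson trancl_into_trancl)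
qed

lemma tr_inf_l: assumes T: "tolerance T" and "(x,y) \<in> T\<^sup>+" shows "(inf u x, inf u y) \<in> T\<^sup>+"
  using tr_inf_r[OF assms, of u] by (simp add: inf_commute)

lemma tr_cong: assumes T: "tolerance T" shows "lattice_congruence (T\<^sup>+)"
proof -
  have "lattice_compatible (T\<^sup>+)"
    unfolding lattice_compatible_def
  proof (intro allI impI conjI)
    fix a b c d assume ab: "(a,b) \<in> T\<^sup>+" and cd: "(c,d) \<in> T\<^sup>+"
    show "(sup a c, sup b d) \<in> T\<^sup>+"
      using tr_sup_r[OF T ab, of c] tr_sup_l[OF T cd, of b] trancl_trans by fast
    show "(inf a c, inf b d) \<in> T\<^sup>+"
      using tr_inf_r[OF T ab, of c] tr_inf_l[OF T cd, of b] trancl_trans by fast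
  qed
  moreover have "equiv UNIV (T\<^sup>+)"
  proof -
    have "refl_on UNIV (T\<^sup>+)" using tol_refl[OF T] by (auto simp: refl_on_def)
    moreover have "sym (T\<^sup>+)" using T by (simp add: sym_trancl tolerance_def)
    ultimately show ?thesis by (simp add: equiv_def trans_trancl)
  qed
  ultimately show ?thesis by (simp add: lattice_congruence_def)
qed

lemma cross: "(x,y) \<in> r\<^sup>+ \<Longrightarrow> P x \<Longrightarrow> \<not> P y \<Longrightarrow> \<exists>u v. (u,v)\<in>r \<and> P u \<and> \<not> P v"
proof (induction rule: trancl_induct)
  case (base y) then show ?case by blast
next
  case (step y z) then show ?case by blast
qed

lemma tol_trivial:
  assumes sl: "simple_lattice TYPE('a::{finite,complete_lattice})"
    and at: "Sup (atoms::'a set) = top \<or> Inf (coatoms::'a set) = bot"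
    and T: "tolerance (T::('a\<times>'a) set)"
  shows "T = Id \<or> T = UNIV"
proof (cases "T\<^sup>+ = Id")
  case True
  have "T \<subseteq> T\<^sup>+" by auto
  with True have "T \<subseteq> Id" by simp
  moreover have "Id \<subseteq> T" using tol_refl[OF T] by auto
  ultimately show ?thesis by blast
next
  case False
  then have U: "T\<^sup>+ = UNIV" using sl tr_cong[OF T] unfolding simple_lattice_def by blast
  have bt: "(bot, top) \<in> T"
    using at
  proof
    assume sa: "Sup (atoms::'a set) = top"
    have A: "(bot, a) \<in> T" if "a \<in> atoms" for a
    proof -
      from that have cv: "bot < a" "\<not> (\<exists>c. bot < c \<and> c < a)" by (auto simp: atoms_def covers_def)
      have "(bot, a) \<in> T\<^sup>+" using U by simp
      from cross[OF this, of "\<lambda>z. inf z a = bot"] cv(1)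
      obtain u v where uv: "(u,v)\<in>T" "inf u a = bot" "inf v a \<noteq> bot" by auto
      have "inf v a = a"
      proof (rule ccontr)
        assume "inf v a \<noteq> a"
        then have "inf v a < a" using inf_le2 order.not_eq_order_implies_strict by blast
        moreover have "bot < inf v a" using uv(3) bot.not_eq_extremum by blast
        ultimately show False using cv(2) by blast
      qed
      with tol_inf[OF T uv(1) tol_refl[OF T, of a]] uv(2) show ?thesis by simp
    qed
    have "finite B \<Longrightarrow> B \<subseteq> atoms \<Longrightarrow> (bot, Sup B) \<in> T" for B
    proof (induction B rule: finite_induct)
      case empty then show ?case using tol_refl[OF T] by simp
    next
      case (insert a B)
      then have "(sup bot bot, sup a (Sup B)) \<in> T" using tol_sup[OF T A] by auto
      then show ?case by simp
    qed
    then have "(bot, Sup (atoms::'a set)) \<in> T" by simp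
    then show ?thesis using sa by simp
  next
    assume sa: "Inf (coatoms::'a set) = bot"
    have A: "(c, top) \<in> T" if "c \<in> coatoms" for c
    proof -
      from that have cv: "c < top" "\<not> (\<exists>x. c < x \<and> x < top)" by (auto simp: coatoms_def covers_def)
      have "(bot, top) \<in> T\<^sup>+" using U by simp
      from cross[OF this, of "\<lambda>z. sup z c \<noteq> top"] cv(1)
      obtain u v where uv: "(u,v)\<in>T" "sup u c \<noteq> top" "sup v c = top" by auto
      have "sup u c = c"
      proof (rule ccontr)
        assume "sup u c \<noteq> c"
        then have "c < sup u c" using sup_ge2 order.not_eq_order_implies_strict by metis
        moreover have "sup u c < top" using uv(2) top.not_eq_extremum by blast
        ultimately show False using cv(2) by blast
      qed
      with tol_sup[OF T uv(1) tol_refl[OF T, of c]] uv(3) show ?thesis by simp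
    qed
    have "finite B \<Longrightarrow> B \<subseteq> coatoms \<Longrightarrow> (Inf B, top) \<in> T" for B
    proof (induction B rule: finite_induct)
      case empty then show ?case using tol_refl[OF T] by simp
    next
      case (insert a B)
      then have "(inf a (Inf B), inf top top) \<in> T" using tol_inf[OF T A] by auto
      then show ?case by simp
    qed
    then have "(Inf (coatoms::'a set), top) \<in> T" by simp
    then show ?thesis using sa by simp
  qed
  have "(a, b) \<in> T" for a b
  proof -
    have 1: "(bot, b) \<in> T" using tol_inf[OF T tol_refl[OF T, of b] bt] by simp
    have 2: "(a, bot) \<in> T" using tol_inf[OF T tol_refl[OF T, of a] tol_sym[OF T bt]] by simp
    show ?thesis using tol_sup[OF T 2 1] by simp
  qed
  then show ?thesis by auto
qed

inductive_set upoly :: "('a::lattice \<Rightarrow> 'a) set" where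
  uid: "(\<lambda>x. x) \<in> upoly"
| uconst: "(\<lambda>x. c) \<in> upoly"
| usup: "f \<in> upoly \<Longrightarrow> g \<in> upoly \<Longrightarrow> (\<lambda>x. sup (f x) (g x)) \<in> upoly"
| uinf: "f \<in> upoly \<Longrightarrow> g \<in> upoly \<Longrightarrow> (\<lambda>x. inf (f x) (g x)) \<in> upoly"

inductive_set bpoly :: "('a::lattice \<Rightarrow> 'a \<Rightarrow> 'a) set" where
  bfst: "(\<lambda>x y. x) \<in> bpoly"
| bsnd: "(\<lambda>x y. y) \<in> bpoly"
| bconst: "(\<lambda>x y. c) \<in> bpoly"
| bsup: "f \<in> bpoly \<Longrightarrow> g \<in> bpoly \<Longrightarrow> (\<lambda>x y. sup (f x y) (g x y)) \<in> bpoly"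
| binf: "f \<in> bpoly \<Longrightarrow> g \<in> bpoly \<Longrightarrow> (\<lambda>x y. inf (f x y) (g x y)) \<in> bpoly"

lemma bpoly_swap: "p \<in> bpoly \<Longrightarrow> (\<lambda>x y. p y x) \<in> bpoly"
  by (induction rule: bpoly.induct) (auto intro: bpoly.intros)

lemma bpoly_mono: "p \<in> bpoly \<Longrightarrow> x \<le> x' \<Longrightarrow> y \<le> y' \<Longrightarrow> p x y \<le> p x' y'"
  by (induction rule: bpoly.induct) (auto intro: le_supI1 le_supI2 le_infI1 le_infI2)

lemma upoly_mono: "p \<in> upoly \<Longrightarrow> x \<le> y \<Longrightarrow> p x \<le> p y"
  by (induction rule: upoly.induct) (auto intro: le_supI1 le_supI2 le_infI1 le_infI2)

lemma bpoly_comp: "p \<in> bpoly \<Longrightarrow> g \<in> upoly \<Longrightarrow> h \<in> upoly \<Longrightarrow> (\<lambda>z. p (g z) (h z)) \<in> upoly"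
  by (induction rule: bpoly.induct) (auto intro: upoly.intros)

lemma upoly_poly: "q \<in> upoly \<Longrightarrow> (\<lambda>x. q (x i)) \<in> polynomials"
  by (induction rule: upoly.induct) (auto intro: polynomials.intros)

definition tg :: "'a::lattice \<Rightarrow> 'a \<Rightarrow> ('a \<times> 'a) set" where
  "tg a b = {(p a b, p b a) | p. p \<in> bpoly}"

lemma tg_tol: "tolerance (tg a b)"
  unfolding tolerance_def
proof (intro conjI)
  show "refl (tg a b)" unfolding refl_on_def tg_def
  proof
    fix x :: 'a
    have "(\<lambda>x y. x) \<in> bpoly" by (rule bpoly.intros)
    show "(x, x) \<in> {(p a b, p b a) |p. p \<in> bpoly}"
      using bpoly.bconst[of x] by force
  qed
  show "sym (tg a b)" unfolding sym_def tg_def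
    using bpoly_swap by fastforce
  show "lattice_compatible (tg a b)" unfolding lattice_compatible_def tg_def
  proof (intro allI impI conjI)
    fix x y u v assume "(x,y) \<in> {(p a b, p b a) |p. p \<in> bpoly}" "(u,v) \<in> {(p a b, p b a) |p. p \<in> bpoly}"
    then obtain p q where pq: "p \<in> bpoly" "q \<in> bpoly" "x = p a b" "y = p b a" "u = q a b" "v = q b a" by blast
    show "(sup x u, sup y v) \<in> {(p a b, p b a) |p. p \<in> bpoly}"
      using pq bpoly.bsup[OF pq(1,2)] by force
    show "(inf x u, inf y v) \<in> {(p a b, p b a) |p. p \<in> bpoly}"
      using pq bpoly.binf[OF pq(1,2)] by force
  qed
qed

lemma sep:
  assumes tf: "\<forall>T::('a::bounded_lattice\<times>'a) set. tolerance T \<longrightarrow> T = Id \<or> T = UNIV"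
    and nc: "\<not> (c::'a) \<le> b"
  shows "\<exists>q\<in>upoly. q c = top \<and> q b = bot"
proof -
  have ne: "b \<noteq> sup c b" using nc by (metis sup_ge1)
  have "(b, sup c b) \<in> tg b (sup c b)" unfolding tg_def
    by (intro CollectI exI[of _ "\<lambda>x y. x"]) (simp add: bpoly.bfst)
  then have "tg b (sup c b) \<noteq> Id" using ne by auto
  moreover have "tg b (sup c b) = Id \<or> tg b (sup c b) = UNIV" using tf[rule_format, OF tg_tol] .
  ultimately have "tg b (sup c b) = UNIV" by simp
  then have "(bot, top) \<in> tg b (sup c b)" by simp
  then obtain p where p: "p \<in> bpoly" "bot = p b (sup c b)" "top = p (sup c b) b"
    unfolding tg_def by blast
  define q where "q = (\<lambda>y. p (sup y b) b)"
  have "q \<in> upoly" unfolding q_def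
    by (rule bpoly_comp[OF p(1)]) (auto intro: upoly.intros)
  moreover have "q c = top" using p unfolding q_def by simp
  moreover have "q b \<le> bot" using bpoly_mono[OF p(1), of b b b "sup c b"] p(2) unfolding q_def by simp
  ultimately show ?thesis using bot.extremum_uniqueI by blast
qed

lemma indicator:
  assumes tf: "\<forall>T::('a::{finite,bounded_lattice}\<times>'a) set. tolerance T \<longrightarrow> T = Id \<or> T = UNIV"
  shows "\<exists>u\<in>upoly. \<forall>y. u y = (if c \<le> y then top else (bot::'a))"
proof -
  have "finite B \<Longrightarrow> B \<subseteq> {b. \<not> c \<le> b} \<Longrightarrow> \<exists>r\<in>upoly. r c = top \<and> (\<forall>b\<in>B. r b = bot)" for B
  proof (induction B rule: finite_induct)
    case empty then show ?case using upoly.uconst[of top] by auto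
  next
    case (insert b B)
    then obtain r where r: "r \<in> upoly" "r c = top" "\<forall>b\<in>B. r b = bot" by auto
    obtain q where q: "q \<in> upoly" "q c = top" "q b = bot" using sep[OF tf, of c b] insert.prems by auto
    show ?case using upoly.uinf[OF r(1) q(1)] r q by (intro bexI[of _ "\<lambda>x. inf (r x) (q x)"]) auto
  qed
  from this[of "{b. \<not> c \<le> b}"] obtain r where r: "r \<in> upoly" "r c = top" "\<forall>b. \<not> c \<le> b \<longrightarrow> r b = bot"
    by auto
  have "r y = (if c \<le> y then top else bot)" for y
  proof (cases "c \<le> y")
    case True then show ?thesis using upoly_mono[OF r(1) True] r(2) by (simp add: top.extremum_uniqueI)
  qed (use r in auto)
  then show ?thesis using r(1) by blast
qed

lemma tuple_ind:
  assumes tf: "\<forall>T::('a::{finite,bounded_lattice}\<times>'a) set. tolerance T \<longrightarrow> T = Id \<or> T = UNIV"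
  shows "finite I \<Longrightarrow> \<exists>P\<in>polynomials. \<forall>x. P x = (if \<forall>i\<in>I. a i \<le> x i then top else (bot::'a))"
proof (induction I rule: finite_induct)
  case empty then show ?case using polynomials.const[of top] by auto
next
  case (insert i I)
  then obtain P where P: "P \<in> polynomials" "\<forall>x. P x = (if \<forall>i\<in>I. a i \<le> x i then top else bot)" by auto
  obtain u where u: "u \<in> upoly" "\<forall>y. u y = (if a i \<le> y then top else (bot::'a))" using indicator[OF tf] by blast
  have pm: "(\<lambda>x. inf (P x) (u (x i))) \<in> polynomials" using polynomials.meet[OF P(1) upoly_poly[OF u(1)]] .
  moreover have pv: "\<forall>x. inf (P x) (u (x i)) = (if \<forall>j\<in>insert i I. a j \<le> x j then top else bot)"
    using P(2) u(2) by auto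
  show ?case by (rule bexI[where x="\<lambda>x. inf (P x) (u (x i))"], (use pv pm in auto)+)
qed

lemma mono_poly:
  assumes tf: "\<forall>T::('a::{finite,complete_lattice}\<times>'a) set. tolerance T \<longrightarrow> T = Id \<or> T = UNIV"
    and mf: "mono (f :: ('n::finite \<Rightarrow> 'a) \<Rightarrow> 'a)"
  shows "f \<in> polynomials"
proof -
  have PA: "\<exists>P\<in>polynomials. \<forall>x. P x = (if a \<le> x then top else (bot::'a))" for a :: "'n \<Rightarrow> 'a"
    using tuple_ind[OF tf, of UNIV a] by (simp add: le_fun_def)
  have "finite A \<Longrightarrow> \<exists>G\<in>polynomials. \<forall>x. G x = (SUP a\<in>A. inf (f a) (if a \<le> x then top else bot))" for A
  proof (induction A rule: finite_induct)
    case empty then show ?case using polynomials.const[of bot] by auto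
  next
    case (insert a A)
    then obtain G where G: "G \<in> polynomials" "\<forall>x. G x = (SUP a\<in>A. inf (f a) (if a \<le> x then top else bot))" by auto
    obtain P where P: "P \<in> polynomials" "\<forall>x. P x = (if a \<le> x then top else (bot::'a))" using PA by blast
    have gm: "(\<lambda>x. sup (inf (f a) (P x)) (G x)) \<in> polynomials"
      by (intro polynomials.join polynomials.meet polynomials.const P(1) G(1))
    have gv: "\<forall>x. sup (inf (f a) (P x)) (G x) = (SUP a\<in>insert a A. inf (f a) (if a \<le> x then top else bot))"
      using P(2) G(2) by simp
    show ?case by (rule bexI[where x="\<lambda>x. sup (inf (f a) (P x)) (G x)"], (use gv gm in auto)+)
  qed
  from this[of UNIV] obtain G where G: "G \<in> polynomials" "\<forall>x. G x = (SUP a. inf (f a) (if a \<le> x then top else bot))"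
    by auto
  have "G x = f x" for x
  proof -
    have "(SUP a. inf (f a) (if a \<le> x then top else bot)) \<le> f x"
      by (rule SUP_least) (auto intro: le_infI1 monoD[OF mf])
    moreover have "f x \<le> (SUP a. inf (f a) (if a \<le> x then top else bot))"
      using SUP_upper[of x UNIV "\<lambda>a. inf (f a) (if a \<le> x then top else bot)"] by simp
    ultimately show ?thesis using G(2) by (simp add: antisym)
  qed
  then have "G = f" by auto
  then show ?thesis using G(1) by simp
qed

lemma poly_mono: "p \<in> polynomials \<Longrightarrow> mono p"
  by (induction rule: polynomials.induct) (auto simp: monotone_def le_fun_def intro: le_supI1 le_supI2 le_infI1 le_infI2)

theorem mainTheorem8:
  assumes "simple_lattice TYPE('a::{finite, complete_lattice})"
    and "Sup (atoms :: 'a set) = top \<or> Inf (coatoms :: 'a set) = bot"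
  shows "{T :: ('a \<times> 'a) set. tolerance T} = {Id, UNIV}
    \<and> (aggregation_functions :: (('n::finite \<Rightarrow> 'a) \<Rightarrow> 'a) set) = polynomials_01"
proof
  have tf: "\<forall>T::('a\<times>'a) set. tolerance T \<longrightarrow> T = Id \<or> T = UNIV"
    using tol_trivial[OF assms] by blast
  have "tolerance (Id::('a\<times>'a) set)"
    by (auto simp: tolerance_def lattice_compatible_def refl_on_def sym_def)
  moreover have "tolerance (UNIV::('a\<times>'a) set)"
    by (auto simp: tolerance_def lattice_compatible_def refl_on_def sym_def)
  ultimately show "{T :: ('a \<times> 'a) set. tolerance T} = {Id, UNIV}" using tf by auto
  show "(aggregation_functions :: (('n::finite \<Rightarrow> 'a) \<Rightarrow> 'a) set) = polynomials_01"
    unfolding aggregation_functions_def polynomials_01_def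
    using mono_poly[OF tf] poly_mono by blast
qed

end
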